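(* Define $U:[0,\infty)\to\mathbb{R}$ by $U(r)=\lim_{n\to\infty}u_n(r)$ where $u_0(r)=r$, $u_1(r)=\sqrt{1+r^2}$, $u_2(r)=\sqrt{1+\sqrt{1+r^4}}$, and in general $u_n(r)=\sqrt{1+\sqrt{1+\dots+\sqrt{1+r^{2^n}}}}$ ($n$ nested roots). For real numbers $s>r\ge1$, $U(s)>U(r)$.
   Context: The limit defining $U(r)$ exists for every $r\ge0$ (this is the transfinite radical $\kappa_i([i<\omega]+r[i=\omega])$). *)

theory Defs
  imports Complex_Main
begin

text \<open>Nested radicals: u 0 r = r, u (n+1) r = sqrt (1 + u n (r^2)),
  so u n r = sqrt(1 + sqrt(1 + ... + sqrt(1 + r^(2^n)))) with n roots.\<close>
fun u :: "nat \<Rightarrow> real \<Rightarrow> real" where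
  "u 0 r = r"
| "u (Suc n) r = sqrt (1 + u n (r ^ 2))"

definition U :: "real \<Rightarrow> real" where
  "U r = lim (\<lambda>n. u n r)"

end

theory Submission
  imports Defs
begin

lemma u_bound: "1 \<le> x \<Longrightarrow> u m x \<le> x + 1"
proof (induction m arbitrary: x)
  case 0 then show ?case by simp
next
  case (Suc m)
  have "1 \<le> x^2" using Suc.prems by (simp add: one_le_power)
  then have "u m (x^2) \<le> x^2 + 1" using Suc.IH by blast
  then have "sqrt (1 + u m (x^2)) \<le> sqrt ((x+1)^2)"
    using Suc.prems by (intro real_sqrt_le_mono) (simp add: power2_eq_square algebra_simps)
  then show ?case using Suc.prems by simp
qed

lemma u_inc: "u n x \<le> u (Suc n) x"
proof (induction n arbitrary: x)
  case 0
  have "x \<le> sqrt (1 + x^2)"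
    by (metis add.commute le_add_same_cancel2 real_le_rsqrt zero_le_one real_sqrt_le_iff abs_ge_self real_sqrt_abs order_trans power2_eq_square zero_le_square)
  then show ?case by simp
next
  case (Suc n)
  have "u n (x^2) \<le> u (Suc n) (x^2)" by (rule Suc.IH)
  then have "sqrt (1 + u n (x^2)) \<le> sqrt (1 + u (Suc n) (x^2))" by simp
  then show ?case by (simp only: u.simps)
qed

lemma conv: assumes "1 \<le> r" shows "(\<lambda>n. u n r) \<longlonglongrightarrow> U r"
proof -
  have "incseq (\<lambda>n. u n r)" by (intro incseq_SucI) (rule u_inc)
  moreover have "\<And>n. u n r \<le> r + 1" using assms u_bound by blast
  ultimately have "convergent (\<lambda>n. u n r)"
    by (meson convergent_def incseq_convergent)
  then show ?thesis unfolding U_def by (simp add: convergent_LIMSEQ_iff)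
qed

lemma U_ge: assumes "1 \<le> r" shows "r \<le> U r"
proof -
  have "incseq (\<lambda>n. u n r)" by (intro incseq_SucI) (rule u_inc)
  from incseq_le[OF this conv[OF assms], of 0] show ?thesis by simp
qed

lemma U_le: assumes "1 \<le> r" shows "U r \<le> r + 1"
  using LIMSEQ_le_const2[OF conv[OF assms]] u_bound[OF assms] by blast

lemma U_eq: assumes "1 \<le> r" shows "U r = sqrt (1 + U (r^2))"
proof -
  have r2: "1 \<le> r^2" using assms by (simp add: one_le_power)
  have "(\<lambda>n. u (Suc n) r) \<longlonglongrightarrow> U r" using conv[OF assms] by (rule LIMSEQ_Suc)
  moreover have "(\<lambda>n. u (Suc n) r) \<longlonglongrightarrow> sqrt (1 + U (r^2))"
    using conv[OF r2] by (simp add: tendsto_real_sqrt tendsto_add)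
  ultimately show ?thesis using LIMSEQ_unique by blast
qed

lemma P: "1 \<le> r \<Longrightarrow> r \<le> s \<Longrightarrow> s^(2^N) > r^(2^N) + 1 \<Longrightarrow> U s > U r"
proof (induction N arbitrary: r s)
  case 0
  then have "U r \<le> r + 1" by (simp add: U_le)
  moreover have "s \<le> U s" using 0 by (simp add: U_ge)
  ultimately show ?case using 0 by simp
next
  case (Suc N)
  have r2: "1 \<le> r^2" using Suc.prems by (simp add: one_le_power)
  have s1: "1 \<le> s" using Suc.prems by simp
  have "r^2 \<le> s^2" using Suc.prems by (simp add: power_mono)
  moreover have "(s^2)^(2^N) > (r^2)^(2^N) + 1"
    using Suc.prems(3) by (simp add: power_mult[symmetric] mult.commute)
  ultimately have "U (s^2) > U (r^2)" using Suc.IH r2 by blast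
  then have "sqrt (1 + U (r^2)) < sqrt (1 + U (s^2))" by simp
  then show ?case using U_eq[OF Suc.prems(1)] U_eq[OF s1] by simp
qed

lemma gap: fixes r s :: real assumes "1 \<le> r" "r \<le> s" shows "s^(2^N) - r^(2^N) \<ge> 2^N * (s - r)"
proof (induction N)
  case 0 then show ?case by (simp add: algebra_simps)
next
  case (Suc N)
  have a: "1 \<le> r^(2^N)" using assms by (simp add: one_le_power)
  have b: "1 \<le> s^(2^N)" using assms by (simp add: one_le_power)
  have d: "0 \<le> s^(2^N) - r^(2^N)" using assms by (simp add: power_mono)
  have "s^(2^Suc N) - r^(2^Suc N) = (s^(2^N) - r^(2^N)) * (s^(2^N) + r^(2^N))"
    by (simp add: power_mult power2_eq_square algebra_simps)
  also have "\<dots> \<ge> (s^(2^N) - r^(2^N)) * 2"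
    using a b d by (intro mult_left_mono) auto
  finally show ?case using Suc.IH by simp
qed

theorem lemma9:
  fixes r s :: real
  assumes "1 \<le> r" and "r < s"
  shows "U s > U r"
proof -
  obtain N where N: "1 / (s - r) < 2^N" using real_arch_pow[of 2 "1/(s-r)"] by auto
  then have "1 < 2^N * (s - r)" using assms by (simp add: field_simps)
  with gap[OF assms(1), of s N] assms have "s^(2^N) > r^(2^N) + 1" by simp
  then show ?thesis using P assms by simp
qed

end
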